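(* Let $\mathbf m=(m_1,\dots,m_r)$ be a type and let $e=n-m_1-\dots-m_r$ be the number of empty sites. Then \[ \frac{Z_{\mathbf m}}{Z_{\mathbf m^-}}=h_e(\underbrace{t_1,\dots,t_1}_{m_1},\underbrace{t_2,\dots,t_2}_{m_2},\dots,\underbrace{t_{r-1},\dots,t_{r-1}}_{m_{r-1}},\underbrace{t_r,\dots,t_r}_{m_r+1}), \] where $h_e$ is the complete homogeneous symmetric polynomial of degree $e$.
   Context: Fix a positive integer $n$; sites $1,\dots,n$ are arranged cyclically. A word is $w=w_1\cdots w_n\in\{1,2,\dots,\infty\}^n$; finite entries are particles, entries $\infty$ are empty sites. A type is a tuple $\mathbf m=(m_1,\dots,m_r)$ of positive integers with $m_1+\dots+m_r\le n$; a word has type $\mathbf m$ if it has exactly $m_i$ entries $i$ and all other entries $\infty$. Put $\mathbf m^-=(m_1,\dots,m_{r-1})$. Queues: a queue of capacity $c$ is a choice of $c$ of the $n$ sites, called terminal. Given an input word $x$ whose finite entries lie in $\{1,\dots,i-1\}$, replace each $\infty$ by $i$; then the $n$ particles enter the queue one at a time in an order in which smaller particles come before larger ones (ties arbitrary). A particle at site $j$ first visits site $j$, then $j+1,j+2,\dots$ cyclically, stopping at (and occupying) the first terminal site not yet occupied; if all terminal sites are occupied it visits every site and is discarded. The output $q(x)$ has at each terminal site the size of the particle occupying it and $\infty$ at each non-terminal site. For each size $s$ let $\alpha_s$ be the number of non-terminal sites whose first visitor has size $s$; the weight of $q$ with respect to $x$ is $\prod_s t_s^{\alpha_s}$. Multi-line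 queues: a multi-line queue of type $(m_1,\dots,m_r)$ is a sequence $(q_1,\dots,q_r)$ of queues with $q_i$ of capacity $m_1+\dots+m_i$. Feed $q_1$ the all-$\infty$ word and $q_i$ the output of $q_{i-1}$. The weight $[\mathbf q]$ is the product over $i$ of the weight of $q_i$ with respect to its input. $Z_{\mathbf m}$ is the sum of $[\mathbf q]$ over all multi-line queues of type $\mathbf m$ (a polynomial in $t_1,\dots,t_r$); for the empty type ($r=0$), $Z=1$. *)

theory Defs
  imports Main
begin

text \<open>Sites are 0,...,n-1 (site k here is site k+1 of the paper), arranged cyclically.
  A word is a function nat => nat option on the sites; None stands for infinity (empty site),
  Some s for a particle of size s.\<close>

type_synonym word = "nat \<Rightarrow> nat option"

text \<open>Size of the particle at site j when the input word x is fed into the i-th queue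
  (every infinity is replaced by i).\<close>
definition psize :: "nat \<Rightarrow> word \<Rightarrow> nat \<Rightarrow> nat" where
  "psize i x j = (case x j of Some s \<Rightarrow> s | None \<Rightarrow> i)"

text \<open>Order in which the n particles enter: by size, ties broken by site index
  (sort_key is stable).\<close>
definition particles :: "nat \<Rightarrow> nat \<Rightarrow> word \<Rightarrow> (nat \<times> nat) list" where
  "particles n i x = sort_key fst (map (\<lambda>j. (psize i x j, j)) [0..<n])"

text \<open>Number of steps a particle starting at j travels before reaching the first
  terminal, unoccupied site (None if there is none: the particle is discarded).\<close>
definition stop_index :: "nat \<Rightarrow> nat set \<Rightarrow> word \<Rightarrow> nat \<Rightarrow> nat option" where
  "stop_index n T occ j =
     (if \<exists>k<n. (j + k) mod n \<in> T \<and> occ ((j + k) mod n) = None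
      then Some (LEAST k. (j + k) mod n \<in> T \<and> occ ((j + k) mod n) = None)
      else None)"

definition visited :: "nat \<Rightarrow> nat set \<Rightarrow> word \<Rightarrow> nat \<Rightarrow> nat set" where
  "visited n T occ j =
     (case stop_index n T occ j of
        Some k0 \<Rightarrow> {(j + k) mod n | k. k \<le> k0}
      | None \<Rightarrow> {(j + k) mod n | k. k < n})"

text \<open>State: (occupation of terminal sites, size of first visitor of each site).\<close>
definition qstep :: "nat \<Rightarrow> nat set \<Rightarrow> word \<times> word \<Rightarrow> nat \<times> nat \<Rightarrow> word \<times> word" where
  "qstep n T st p =
     (let occ = fst st; fv = snd st; s = fst p; j = snd p;
          V = visited n T occ j
      in ((case stop_index n T occ j of
             Some k0 \<Rightarrow> occ((j + k0) mod n := Some s)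
           | None \<Rightarrow> occ),
          (\<lambda>q. if fv q = None \<and> q \<in> V then Some s else fv q)))"

definition qrun :: "nat \<Rightarrow> nat set \<Rightarrow> nat \<Rightarrow> word \<Rightarrow> word \<times> word" where
  "qrun n T i x = foldl (qstep n T) (\<lambda>_. None, \<lambda>_. None) (particles n i x)"

definition queue_out :: "nat \<Rightarrow> nat set \<Rightarrow> nat \<Rightarrow> word \<Rightarrow> word" where
  "queue_out n T i x = (\<lambda>q. if q \<in> T then fst (qrun n T i x) q else None)"

definition alpha :: "nat \<Rightarrow> nat set \<Rightarrow> nat \<Rightarrow> word \<Rightarrow> nat \<Rightarrow> nat" where
  "alpha n T i x s = card {q. q < n \<and> q \<notin> T \<and> snd (qrun n T i x) q = Some s}"

text \<open>Weight of the queue w.r.t. input x (all particle sizes lie in 1..i).\<close>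
definition queue_weight :: "nat \<Rightarrow> nat set \<Rightarrow> nat \<Rightarrow> word \<Rightarrow> (nat \<Rightarrow> 'a::comm_ring_1) \<Rightarrow> 'a" where
  "queue_weight n T i x t = (\<Prod>s\<in>{1..i}. t s ^ alpha n T i x s)"

fun mlq_weight :: "nat \<Rightarrow> nat \<Rightarrow> word \<Rightarrow> nat set list \<Rightarrow> (nat \<Rightarrow> 'a::comm_ring_1) \<Rightarrow> 'a" where
  "mlq_weight n i x [] t = 1"
| "mlq_weight n i x (T # Ts) t =
     queue_weight n T i x t * mlq_weight n (Suc i) (queue_out n T i x) Ts t"

text \<open>Multi-line queues of type m: lists of terminal sets, the i-th (0-based) of
  capacity m_1 + ... + m_(i+1).\<close>
definition mlqs :: "nat \<Rightarrow> nat list \<Rightarrow> nat set list set" where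
  "mlqs n m = {Ts. length Ts = length m \<and>
     (\<forall>i<length m. Ts ! i \<subseteq> {..<n} \<and> card (Ts ! i) = sum_list (take (Suc i) m))}"

definition Z :: "nat \<Rightarrow> nat list \<Rightarrow> (nat \<Rightarrow> 'a::comm_ring_1) \<Rightarrow> 'a" where
  "Z n m t = (\<Sum>Ts\<in>mlqs n m. mlq_weight n 1 (\<lambda>_. None) Ts t)"

definition is_type :: "nat \<Rightarrow> nat list \<Rightarrow> bool" where
  "is_type n m \<longleftrightarrow> (\<forall>k\<in>set m. 0 < k) \<and> sum_list m \<le> n"

definition complete_hom :: "nat \<Rightarrow> 'a::comm_ring_1 list \<Rightarrow> 'a" where
  "complete_hom e xs =
     (\<Sum>a\<in>{a. (\<forall>k\<ge>length xs. a k = 0) \<and> (\<Sum>k<length xs. a k) = e}.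
        \<Prod>k<length xs. xs ! k ^ a k)"

definition hvars :: "nat list \<Rightarrow> (nat \<Rightarrow> 'a) \<Rightarrow> 'a list" where
  "hvars m t = concat (map (\<lambda>k. replicate (m ! k + (if k = length m - 1 then 1 else 0)) (t (Suc k)))
                          [0..<length m])"

end

theory Submission
  imports Defs "HOL-Library.Multiset"
begin


definition free :: "nat set \<Rightarrow> word \<Rightarrow> nat \<Rightarrow> bool" where
  "free T occ q \<longleftrightarrow> q \<in> T \<and> occ q = None"

lemma stop_index_SomeD:
  assumes "stop_index n T occ a = Some k"
  shows "k < n \<and> free T occ ((a + k) mod n) \<and> (\<forall>k'<k. \<not> free T occ ((a + k') mod n))"
proof -
  define P where "P = (\<lambda>k. free T occ ((a + k) mod n))"
  have ex: "\<exists>k<n. P k" and k: "k = (LEAST k. P k)"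
    using assms by (auto simp: stop_index_def P_def free_def split: if_splits)
  then obtain k1 where k1: "k1 < n" "P k1" by blast
  have "P k" unfolding k by (rule LeastI[where k=k1]) (fact k1)
  moreover have "k \<le> k1" unfolding k by (rule Least_le) (fact k1)
  moreover have "\<forall>k'<k. \<not> P k'" unfolding k using not_less_Least by blast
  ultimately show ?thesis using k1 unfolding P_def by simp
qed

lemma stop_index_NoneD:
  assumes "stop_index n T occ a = None" "k < n"
  shows "\<not> free T occ ((a + k) mod n)"
  using assms unfolding stop_index_def free_def by (auto split: if_splits)

lemma stop_index_SomeI:
  assumes "k < n" "free T occ ((a + k) mod n)" "\<forall>k'<k. \<not> free T occ ((a + k') mod n)"
  shows "stop_index n T occ a = Some k"
proof -
  define P where "P = (\<lambda>k. free T occ ((a + k) mod n))"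
  have Pk: "P k" using assms(2) by (simp add: P_def)
  have "(LEAST k. P k) = k"
  proof (rule Least_equality)
    show "P k" by (fact Pk)
  next
    fix y assume y: "P y"
    show "k \<le> y"
    proof (rule ccontr)
      assume "\<not> k \<le> y" hence "y < k" by simp
      with assms(3) y show False by (simp add: P_def)
    qed
  qed
  moreover have "\<exists>k<n. P k" using Pk assms(1) by blast
  ultimately show ?thesis unfolding stop_index_def P_def free_def by simp
qed

lemma stop_index_NoneI:
  assumes "\<forall>k<n. \<not> free T occ ((a + k) mod n)"
  shows "stop_index n T occ a = None"
  using assms unfolding stop_index_def free_def by auto

lemma walk_hit_aux:
  fixes n q a :: nat
  assumes "0 < n" "q < n"
  shows "(a + (q + n - a mod n) mod n) mod n = q"
proof -
  have "(a + (q + n - a mod n) mod n) mod n = (a mod n + (q + n - a mod n)) mod n"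
    by (simp add: mod_add_left_eq mod_add_right_eq)
  also have "a mod n + (q + n - a mod n) = q + n"
    using mod_less_divisor[OF assms(1), of a] by linarith
  finally show ?thesis using assms by simp
qed

lemma walk_hit: "0 < n \<Longrightarrow> (q::nat) < n \<Longrightarrow> \<exists>k<n. (a + k) mod n = q"
  by (rule exI[of _ "(q + n - a mod n) mod n"]) (simp add: walk_hit_aux)

lemma walk_all: "0 < (n::nat) \<Longrightarrow> {(a + k) mod n | k. k < n} = {..<n}"
proof
  assume "0 < n"
  show "{..<n} \<subseteq> {(a + k) mod n | k. k < n}"
  proof
    fix q assume "q \<in> {..<n}"
    then obtain k where "k < n" "(a + k) mod n = q" using walk_hit[OF \<open>0<n\<close>] by blast
    then show "q \<in> {(a + k) mod n | k. k < n}" by blast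
  qed
qed auto


definition del :: "nat \<Rightarrow> nat \<Rightarrow> nat" where
  "del j q = (if q < j then q else q - 1)"

lemma mod_between: "(m::nat) \<le> x \<Longrightarrow> x < 2 * m \<Longrightarrow> x mod m = x - m"
  by (metis le_add_diff_inverse2 mod_add_self2 mod_less add_less_cancel_right mult_2)

definition kj :: "nat \<Rightarrow> nat \<Rightarrow> nat \<Rightarrow> nat" where
  "kj n j a = (if a < j then j - a else j + n - a)"

lemma walk_del1:
  assumes "j < n" "a < n" "a \<noteq> j"
  shows "0 < kj n j a \<and> kj n j a < n \<and> (a + kj n j a) mod n = j"
proof (cases "a < j")
  case True thus ?thesis using assms by (simp add: kj_def)
next
  case False
  hence "a + (j + n - a) = j + n" using assms by linarith
  thus ?thesis using assms False by (simp add: kj_def)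
qed

lemma walk_del2:
  assumes "j < n" "a < n" "a \<noteq> j" "k < kj n j a"
  shows "(a + k) mod n \<noteq> j \<and> del j ((a + k) mod n) = (del j a + k) mod (n - 1)"
proof (cases "a < j")
  case True
  hence "a + k < j" using assms by (simp add: kj_def)
  thus ?thesis using assms True by (simp add: del_def)
next
  case False
  hence aj: "j < a" "k < j + n - a" using assms by (auto simp: kj_def)
  show ?thesis
  proof (cases "a + k < n")
    case True
    thus ?thesis using aj by (simp add: del_def)
  next
    case False
    have m1: "(a + k) mod n = a + k - n" using False aj assms by (intro mod_between) auto
    have m2: "(a - 1 + k) mod (n - 1) = a + k - n" using False aj assms
      by (subst mod_between) auto
    have "a + k - n < j" using aj False by linarith
    thus ?thesis using m1 m2 aj False by (simp add: del_def)
  qed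
qed

lemma walk_del3:
  assumes "j < n" "a < n" "a \<noteq> j" "kj n j a < k" "k < n"
  shows "(a + k) mod n \<noteq> j \<and> del j ((a + k) mod n) = (del j a + (k - 1)) mod (n - 1)"
proof (cases "a < j")
  case True
  hence kk: "j - a < k" using assms by (simp add: kj_def)
  show ?thesis
  proof (cases "a + k < n")
    case True
    have "j < a + k" using kk \<open>a<j\<close> by linarith
    thus ?thesis using True \<open>a<j\<close> kk by (simp add: del_def)
  next
    case False
    have m1: "(a + k) mod n = a + k - n" using False assms by (intro mod_between) auto
    have m2: "(a + (k - 1)) mod (n - 1) = a + k - n" using False kk assms
      by (subst mod_between) auto
    have "a + k - n < j" using assms \<open>a<j\<close> by linarith
    thus ?thesis using m1 m2 \<open>a<j\<close> False kk by (simp add: del_def)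
  qed
next
  case False
  hence aj: "j < a" "j + n - a < k" using assms by (auto simp: kj_def)
  have m1: "(a + k) mod n = a + k - n" using aj assms by (intro mod_between) auto
  have m2: "(a - 1 + (k - 1)) mod (n - 1) = a + k - n - 1" using aj assms
    by (subst mod_between) auto
  have "j < a + k - n" using aj assms by linarith
  thus ?thesis using m1 m2 aj by (simp add: del_def)
qed


definition phi :: "nat \<Rightarrow> nat \<Rightarrow> nat" where "phi K k = (if k < K then k else k - 1)"
definition psi :: "nat \<Rightarrow> nat \<Rightarrow> nat" where "psi K k = (if k < K then k else k + 1)"

lemma walk_map:
  assumes "j < n" "a < n" "a \<noteq> j" "k < n" "k \<noteq> kj n j a"
  shows "(a + k) mod n \<noteq> j \<and> del j ((a + k) mod n) = (del j a + phi (kj n j a) k) mod (n - 1)"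
proof (cases "k < kj n j a")
  case True thus ?thesis using walk_del2[OF assms(1-3) True] by (simp add: phi_def)
next
  case False
  hence "kj n j a < k" using assms(5) by simp
  thus ?thesis using walk_del3[OF assms(1-3) _ assms(4)] False by (simp add: phi_def)
qed

lemma del_lt: "j < n \<Longrightarrow> q < n \<Longrightarrow> q \<noteq> j \<Longrightarrow> del j q < n - 1"
  by (auto simp: del_def)

lemma del_inj: "q \<noteq> j \<Longrightarrow> q' \<noteq> j \<Longrightarrow> del j q = del j q' \<Longrightarrow> q = q'"
  by (auto simp: del_def split: if_splits)

definition undel :: "nat \<Rightarrow> nat \<Rightarrow> nat" where
  "undel j q = (if q < j then q else q + 1)"

lemma undel_del: "q \<noteq> j \<Longrightarrow> undel j (del j q) = q"
  by (auto simp: del_def undel_def)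
lemma del_undel: "del j (undel j q) = q"
  by (auto simp: del_def undel_def)
lemma undel_ne: "undel j q \<noteq> j"
  by (auto simp: undel_def)
lemma undel_lt: "q < n - 1 \<Longrightarrow> undel j q < n"
  by (auto simp: undel_def)

definition Tdel :: "nat \<Rightarrow> nat set \<Rightarrow> nat set" where
  "Tdel j T = del j ` (T - {j})"

lemma Tdel_iff: "q \<noteq> j \<Longrightarrow> del j q \<in> Tdel j T \<longleftrightarrow> q \<in> T"
  unfolding Tdel_def using del_inj by blast

definition Rel :: "nat \<Rightarrow> nat \<Rightarrow> nat set \<Rightarrow> word \<times> word \<Rightarrow> word \<times> word \<Rightarrow> bool" where
  "Rel n j T st st' \<longleftrightarrow>
     (\<forall>q<n. q \<noteq> j \<longrightarrow> fst st q = fst st' (del j q) \<and> snd st q = snd st' (del j q))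
     \<and> \<not> free T (fst st) j"

lemma Rel_free:
  assumes "Rel n j T st st'" "q < n" "q \<noteq> j"
  shows "free (Tdel j T) (fst st') (del j q) \<longleftrightarrow> free T (fst st) q"
  using assms by (auto simp: Rel_def free_def Tdel_iff)


lemma qstep_eq: "qstep n T (occ, fv) (s, a) =
   ((case stop_index n T occ a of Some k0 \<Rightarrow> occ((a + k0) mod n := Some s) | None \<Rightarrow> occ),
    (\<lambda>q. if fv q = None \<and> q \<in> visited n T occ a then Some s else fv q))"
  by (simp add: qstep_def Let_def)

lemma visited_Some: "stop_index n T occ a = Some k0 \<Longrightarrow> visited n T occ a = {(a + k) mod n | k. k \<le> k0}"
  by (simp add: visited_def)
lemma visited_None: "stop_index n T occ a = None \<Longrightarrow> visited n T occ a = {(a + k) mod n | k. k < n}"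
  by (simp add: visited_def)

lemma Rel_after:
  assumes R: "Rel n j T (occ, fv) (occ', fv')" and jn: "j < n"
    and stops: "(stop_index n T occ a = None \<and> stop_index (n - 1) (Tdel j T) occ' a' = None) \<or>
       (\<exists>k0 k0'. stop_index n T occ a = Some k0 \<and> stop_index (n - 1) (Tdel j T) occ' a' = Some k0'
          \<and> (a + k0) mod n \<noteq> j \<and> (a + k0) mod n < n \<and> del j ((a + k0) mod n) = (a' + k0') mod (n - 1))"
    and V: "\<forall>q<n. q \<noteq> j \<longrightarrow> (q \<in> visited n T occ a \<longleftrightarrow> del j q \<in> visited (n - 1) (Tdel j T) occ' a')"
  shows "Rel n j T (qstep n T (occ, fv) (s, a)) (qstep (n - 1) (Tdel j T) (occ', fv') (s, a'))"
  using stops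
proof
  assume "stop_index n T occ a = None \<and> stop_index (n - 1) (Tdel j T) occ' a' = None"
  then show ?thesis using R V unfolding qstep_eq Rel_def by (auto simp: free_def)
next
  assume "\<exists>k0 k0'. stop_index n T occ a = Some k0 \<and> stop_index (n - 1) (Tdel j T) occ' a' = Some k0'
          \<and> (a + k0) mod n \<noteq> j \<and> (a + k0) mod n < n \<and> del j ((a + k0) mod n) = (a' + k0') mod (n - 1)"
  then obtain k0 k0' where S: "stop_index n T occ a = Some k0" "stop_index (n - 1) (Tdel j T) occ' a' = Some k0'"
    and w: "(a + k0) mod n \<noteq> j" "del j ((a + k0) mod n) = (a' + k0') mod (n - 1)" by blast
  have occ: "\<forall>q<n. q \<noteq> j \<longrightarrow> (occ((a + k0) mod n := Some s)) q = (occ'((a' + k0') mod (n - 1) := Some s)) (del j q)"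
  proof (intro allI impI)
    fix q assume q: "q < n" "q \<noteq> j"
    have "q = (a + k0) mod n \<longleftrightarrow> del j q = (a' + k0') mod (n - 1)"
      using w q del_inj by metis
    thus "(occ((a + k0) mod n := Some s)) q = (occ'((a' + k0') mod (n - 1) := Some s)) (del j q)"
      using R q by (simp add: Rel_def)
  qed
  show ?thesis unfolding qstep_eq S option.case
    using R V occ w(1) unfolding Rel_def by (auto simp: free_def)
qed


lemma step_sim:
  assumes n2: "2 \<le> n" and jn: "j < n" and an: "a < n" and aj: "a \<noteq> j"
    and R: "Rel n j T (occ, fv) (occ', fv')"
  shows "Rel n j T (qstep n T (occ, fv) (s, a)) (qstep (n - 1) (Tdel j T) (occ', fv') (s, del j a))"
proof -
  define K where "K = kj n j a"
  define T' where "T' = Tdel j T"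
  define a' where "a' = del j a"
  have K: "0 < K" "K < n" "(a + K) mod n = j" using walk_del1[OF jn an aj] by (auto simp: K_def)
  have wm: "(a + k) mod n \<noteq> j \<and> del j ((a + k) mod n) = (a' + phi K k) mod (n - 1)"
    if "k < n" "k \<noteq> K" for k
    using walk_map[OF jn an aj that(1)] that(2) by (simp add: K_def a'_def)
  have fr: "free T' occ' ((a' + phi K k) mod (n - 1)) \<longleftrightarrow> free T occ ((a + k) mod n)"
    if "k < n" "k \<noteq> K" for k
  proof -
    have "(a + k) mod n < n" using n2 by simp
    then show ?thesis using Rel_free[OF R, of "(a + k) mod n"] wm[OF that] by (simp add: T'_def)
  qed
  have ps: "psi K k' < n \<and> psi K k' \<noteq> K \<and> phi K (psi K k') = k'" if "k' < n - 1" for k'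
    using that K by (auto simp: psi_def phi_def)
  have nfK: "\<not> free T occ ((a + K) mod n)" using R K by (simp add: Rel_def)
  have wall': "{(a' + k) mod (n - 1) | k. k < n - 1} = {..<n - 1}" using n2 by (intro walk_all) simp
  have wall: "{(a + k) mod n | k. k < n} = {..<n}" using n2 by (intro walk_all) simp
  show ?thesis unfolding T'_def[symmetric] a'_def[symmetric]
  proof (cases "stop_index n T occ a")
    case None
    have nf: "\<not> free T occ ((a + k) mod n)" if "k < n" for k using stop_index_NoneD[OF None that] .
    have None': "stop_index (n - 1) T' occ' a' = None"
    proof (rule stop_index_NoneI, intro allI impI)
      fix k' assume k': "k' < n - 1"
      have "free T' occ' ((a' + k') mod (n - 1)) \<longleftrightarrow> free T occ ((a + psi K k') mod n)"
        using fr[of "psi K k'"] ps[OF k'] by simp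
      then show "\<not> free T' occ' ((a' + k') mod (n - 1))" using nf ps[OF k'] by simp
    qed
    have V: "\<forall>q<n. q \<noteq> j \<longrightarrow> (q \<in> visited n T occ a \<longleftrightarrow> del j q \<in> visited (n - 1) T' occ' a')"
      unfolding visited_None[OF None] visited_None[OF None'] wall wall' using del_lt[OF jn] by auto
    show "Rel n j T (qstep n T (occ, fv) (s, a)) (qstep (n - 1) T' (occ', fv') (s, a'))"
      unfolding T'_def by (rule Rel_after[OF R jn]) (use None None' V in \<open>simp_all add: T'_def\<close>)
  next
    case (Some k0)
    note S = stop_index_SomeD[OF Some]
    have k0K: "k0 \<noteq> K" using S nfK by auto
    have phik0: "phi K k0 < n - 1" using S k0K K by (auto simp: phi_def)
    have Some': "stop_index (n - 1) T' occ' a' = Some (phi K k0)"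
    proof (rule stop_index_SomeI[OF phik0])
      show "free T' occ' ((a' + phi K k0) mod (n - 1))" using fr[of k0] S k0K by simp
      show "\<forall>k'<phi K k0. \<not> free T' occ' ((a' + k') mod (n - 1))"
      proof (intro allI impI)
        fix k' assume k': "k' < phi K k0"
        hence k'n: "k' < n - 1" using phik0 by simp
        have "psi K k' < k0" using k' k0K by (auto simp: psi_def phi_def split: if_splits)
        hence "\<not> free T occ ((a + psi K k') mod n)" using S by simp
        then show "\<not> free T' occ' ((a' + k') mod (n - 1))"
          using fr[of "psi K k'"] ps[OF k'n] by simp
      qed
    qed
    have V: "\<forall>q<n. q \<noteq> j \<longrightarrow> (q \<in> visited n T occ a \<longleftrightarrow> del j q \<in> visited (n - 1) T' occ' a')"
    proof (intro allI impI)
      fix q assume q: "q < n" "q \<noteq> j"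
      show "q \<in> visited n T occ a \<longleftrightarrow> del j q \<in> visited (n - 1) T' occ' a'"
        unfolding visited_Some[OF Some] visited_Some[OF Some']
      proof
        assume "q \<in> {(a + k) mod n |k. k \<le> k0}"
        then obtain k where k: "k \<le> k0" "q = (a + k) mod n" by blast
        have kK: "k \<noteq> K" using k K q by auto
        have "del j q = (a' + phi K k) mod (n - 1)" using wm[of k] k kK S by simp
        moreover have "phi K k \<le> phi K k0" using k by (auto simp: phi_def)
        ultimately show "del j q \<in> {(a' + k) mod (n - 1) |k. k \<le> phi K k0}" by blast
      next
        assume "del j q \<in> {(a' + k) mod (n - 1) |k. k \<le> phi K k0}"
        then obtain k' where k': "k' \<le> phi K k0" "del j q = (a' + k') mod (n - 1)" by blast
        have k'n: "k' < n - 1" using k' phik0 by simp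
        define k where "k = psi K k'"
        have kk: "k < n" "k \<noteq> K" "phi K k = k'" using ps[OF k'n] by (auto simp: k_def)
        have "k \<le> k0" using k'(1) k0K unfolding k_def by (auto simp: psi_def phi_def split: if_splits)
        moreover have "(a + k) mod n = q"
          using wm[OF kk(1,2)] kk(3) k'(2) q del_inj by metis
        ultimately show "q \<in> {(a + k) mod n |k. k \<le> k0}" by blast
      qed
    qed
    have w: "(a + k0) mod n \<noteq> j" "del j ((a + k0) mod n) = (a' + phi K k0) mod (n - 1)"
      using wm[of k0] S k0K by auto
    show "Rel n j T (qstep n T (occ, fv) (s, a)) (qstep (n - 1) T' (occ', fv') (s, a'))"
      unfolding T'_def
      by (rule Rel_after[OF R jn]) (use Some Some' V w n2 in \<open>simp_all add: T'_def\<close>)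
  qed
qed


lemma start_visited: "0 < n \<Longrightarrow> a < n \<Longrightarrow> a \<in> visited n T occ a"
proof (cases "stop_index n T occ a")
  case None
  assume "0 < n" "a < n"
  hence "a = (a + 0) mod n \<and> (0::nat) < n" by simp
  thus ?thesis unfolding visited_None[OF None] by blast
next
  case (Some k0)
  assume "0 < n" "a < n"
  hence "a = (a + 0) mod n \<and> (0::nat) \<le> k0" by simp
  thus ?thesis unfolding visited_Some[OF Some] by blast
qed

lemma shift_mod: "(j + Suc k) mod n = (Suc j mod n + k) mod n"
  by (simp add: mod_add_left_eq)

lemma step_from_j:
  assumes n2: "2 \<le> n" and jn: "j < n" and nf: "\<not> free T occ j"
  defines "a1 \<equiv> Suc j mod n"
  shows "(stop_index n T occ j = None \<and> stop_index n T occ a1 = None) \<or>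
         (\<exists>k0. stop_index n T occ a1 = Some k0 \<and> stop_index n T occ j = Some (Suc k0))"
    and "visited n T occ j = insert j (visited n T occ a1)"
proof -
  have sh: "(j + Suc k) mod n = (a1 + k) mod n" for k unfolding a1_def by (rule shift_mod)
  have nfj: "\<not> free T occ ((a1 + (n - 1)) mod n)"
  proof -
    have "(a1 + (n - 1)) mod n = (j + Suc (n - 1)) mod n" using sh by simp
    also have "\<dots> = j" using n2 jn by simp
    finally show ?thesis using nf by simp
  qed
  have nf0: "\<not> free T occ ((j + 0) mod n)" using nf jn by simp
  have "((stop_index n T occ j = None \<and> stop_index n T occ a1 = None) \<or>
         (\<exists>k0. stop_index n T occ a1 = Some k0 \<and> stop_index n T occ j = Some (Suc k0)))
       \<and> visited n T occ j = insert j (visited n T occ a1)"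
  proof (cases "stop_index n T occ a1")
    case None
    have None': "stop_index n T occ j = None"
    proof (rule stop_index_NoneI, intro allI impI)
      fix k assume k: "k < n"
      show "\<not> free T occ ((j + k) mod n)"
      proof (cases k)
        case 0 thus ?thesis using nf0 by simp
      next
        case (Suc k'') thus ?thesis using stop_index_NoneD[OF None, of k''] k sh by simp
      qed
    qed
    have vj: "visited n T occ j = {..<n}" and va: "visited n T occ a1 = {..<n}"
      unfolding visited_None[OF None] visited_None[OF None'] using n2 by (simp_all add: walk_all)
    show ?thesis unfolding vj va using None None' jn by auto
  next
    case (Some k0)
    note S = stop_index_SomeD[OF Some]
    have "k0 \<noteq> n - 1" using S nfj by auto
    moreover have "k0 < n" using S by simp
    ultimately have k0n: "Suc k0 < n" by linarith
    have Some': "stop_index n T occ j = Some (Suc k0)"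
    proof (rule stop_index_SomeI[OF k0n])
      show "free T occ ((j + Suc k0) mod n)" using S sh by simp
      show "\<forall>k'<Suc k0. \<not> free T occ ((j + k') mod n)"
      proof (intro allI impI)
        fix k' assume "k' < Suc k0"
        thus "\<not> free T occ ((j + k') mod n)" using S sh nf0 by (cases k') auto
      qed
    qed
    have "{(j + k) mod n |k. k \<le> Suc k0} = insert j {(a1 + k) mod n |k. k \<le> k0}"
    proof
      show "{(j + k) mod n |k. k \<le> Suc k0} \<subseteq> insert j {(a1 + k) mod n |k. k \<le> k0}"
      proof
        fix q assume "q \<in> {(j + k) mod n |k. k \<le> Suc k0}"
        then obtain k where k: "k \<le> Suc k0" "q = (j + k) mod n" by blast
        show "q \<in> insert j {(a1 + k) mod n |k. k \<le> k0}"
        proof (cases k)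
          case 0 thus ?thesis using k jn by simp
        next
          case (Suc k'') thus ?thesis using k sh by auto
        qed
      qed
      show "insert j {(a1 + k) mod n |k. k \<le> k0} \<subseteq> {(j + k) mod n |k. k \<le> Suc k0}"
      proof
        fix q assume "q \<in> insert j {(a1 + k) mod n |k. k \<le> k0}"
        then consider "q = j" | k where "k \<le> k0" "q = (a1 + k) mod n" by blast
        then show "q \<in> {(j + k) mod n |k. k \<le> Suc k0}"
        proof cases
          case 1 hence "q = (j + 0) mod n \<and> (0::nat) \<le> Suc k0" using jn by simp
          thus ?thesis by blast
        next
          case 2 hence "q = (j + Suc k) mod n \<and> Suc k \<le> Suc k0" using sh by simp
          thus ?thesis by blast
        qed
      qed
    qed
    then show ?thesis unfolding visited_Some[OF Some] visited_Some[OF Some'] using Some Some' by simp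
  qed
  then show "(stop_index n T occ j = None \<and> stop_index n T occ a1 = None) \<or>
         (\<exists>k0. stop_index n T occ a1 = Some k0 \<and> stop_index n T occ j = Some (Suc k0))"
    and "visited n T occ j = insert j (visited n T occ a1)" by auto
qed


lemma a1_props: "2 \<le> n \<Longrightarrow> j < n \<Longrightarrow> Suc j mod n < n \<and> Suc j mod n \<noteq> j"
proof -
  assume "2 \<le> n" "j < n"
  show ?thesis
  proof (cases "Suc j < n")
    case True thus ?thesis by simp
  next
    case False
    hence "Suc j = n" using \<open>j < n\<close> by simp
    thus ?thesis using \<open>2 \<le> n\<close> by auto
  qed
qed

lemma qstep_j_eq:
  assumes n2: "2 \<le> n" and jn: "j < n" and nf: "\<not> free T occ j"
  shows "fst (qstep n T (occ, fv) (s, j)) = fst (qstep n T (occ, fv) (s, Suc j mod n))"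
    and "q \<noteq> j \<Longrightarrow> snd (qstep n T (occ, fv) (s, j)) q = snd (qstep n T (occ, fv) (s, Suc j mod n)) q"
proof -
  note sf = step_from_j[OF n2 jn nf]
  from sf(1) show "fst (qstep n T (occ, fv) (s, j)) = fst (qstep n T (occ, fv) (s, Suc j mod n))"
  proof
    assume "stop_index n T occ j = None \<and> stop_index n T occ (Suc j mod n) = None"
    thus ?thesis unfolding qstep_eq by simp
  next
    assume "\<exists>k0. stop_index n T occ (Suc j mod n) = Some k0 \<and> stop_index n T occ j = Some (Suc k0)"
    then obtain k0 where "stop_index n T occ (Suc j mod n) = Some k0" "stop_index n T occ j = Some (Suc k0)" by blast
    moreover have "(j + Suc k0) mod n = (Suc j mod n + k0) mod n" by (rule shift_mod)
    ultimately show ?thesis unfolding qstep_eq by (simp del: add_Suc_right add_Suc)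
  qed
  assume "q \<noteq> j"
  thus "snd (qstep n T (occ, fv) (s, j)) q = snd (qstep n T (occ, fv) (s, Suc j mod n)) q"
    unfolding qstep_eq using sf(2) by simp
qed

lemma Rel_cong:
  assumes "fst st1 = fst st2" "\<And>q. q \<noteq> j \<Longrightarrow> snd st1 q = snd st2 q"
  shows "Rel n j T st1 st' = Rel n j T st2 st'"
  using assms unfolding Rel_def by auto

definition dl :: "nat \<Rightarrow> nat \<Rightarrow> nat \<Rightarrow> nat" where
  "dl n j a = (if a = j then del j (Suc j mod n) else del j a)"

lemma step_sim_gen:
  assumes n2: "2 \<le> n" and jn: "j < n" and an: "a < n" and R: "Rel n j T st st'"
  shows "Rel n j T (qstep n T st (s, a)) (qstep (n - 1) (Tdel j T) st' (s, dl n j a))"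
proof -
  obtain occ fv where st: "st = (occ, fv)" by (cases st)
  obtain occ' fv' where st': "st' = (occ', fv')" by (cases st')
  show ?thesis
  proof (cases "a = j")
    case False
    thus ?thesis using step_sim[OF n2 jn an False, of T occ fv occ' fv' s] R st st'
      by (simp add: dl_def)
  next
    case True
    have nf: "\<not> free T occ j" using R st by (simp add: Rel_def)
    note a1 = a1_props[OF n2 jn]
    have "Rel n j T (qstep n T (occ, fv) (s, Suc j mod n)) (qstep (n - 1) (Tdel j T) (occ', fv') (s, del j (Suc j mod n)))"
      using step_sim[OF n2 jn conjunct1[OF a1] conjunct2[OF a1], of T occ fv occ' fv' s] R st st' by simp
    moreover have "Rel n j T (qstep n T (occ, fv) (s, j)) (qstep (n - 1) (Tdel j T) (occ', fv') (s, del j (Suc j mod n)))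
       = Rel n j T (qstep n T (occ, fv) (s, Suc j mod n)) (qstep (n - 1) (Tdel j T) (occ', fv') (s, del j (Suc j mod n)))"
      by (rule Rel_cong) (use qstep_j_eq[OF n2 jn nf] in auto)
    ultimately show ?thesis using True st st' by (simp add: dl_def)
  qed
qed

lemma fold_sim:
  assumes n2: "2 \<le> n" and jn: "j < n"
  shows "(\<forall>p\<in>set L. snd p < n) \<Longrightarrow> Rel n j T st st' \<Longrightarrow>
    Rel n j T (foldl (qstep n T) st L) (foldl (qstep (n - 1) (Tdel j T)) st' (map (\<lambda>p. (fst p, dl n j (snd p))) L))"
proof (induction L arbitrary: st st')
  case Nil thus ?case by simp
next
  case (Cons p L)
  obtain s a where p: "p = (s, a)" by (cases p)
  have "Rel n j T (qstep n T st (s, a)) (qstep (n - 1) (Tdel j T) st' (s, dl n j a))"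
    using step_sim_gen[OF n2 jn _ Cons.prems(2)] Cons.prems(1) p by simp
  thus ?case using Cons.IH Cons.prems(1) p by simp
qed

lemma fv_keep: "snd st q = Some v \<Longrightarrow> snd (foldl (qstep n T) st L) q = Some v"
proof (induction L arbitrary: st)
  case Nil thus ?case by simp
next
  case (Cons p L)
  obtain occ fv where st: "st = (occ, fv)" by (cases st)
  obtain s a where p: "p = (s, a)" by (cases p)
  have "snd (qstep n T st p) q = Some v" using Cons.prems st p by (simp add: qstep_eq)
  thus ?case using Cons.IH by simp
qed

lemma fv_start: "0 < n \<Longrightarrow> a < n \<Longrightarrow> snd (qstep n T (occ, fv) (s, a)) a = (case fv a of None \<Rightarrow> Some s | Some v \<Rightarrow> Some v)"
  using start_visited[of n a T occ] by (simp add: qstep_eq split: option.split)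


definition fvw :: "(nat \<Rightarrow> 'a::comm_ring_1) \<Rightarrow> nat option \<Rightarrow> 'a" where
  "fvw t v = (case v of None \<Rightarrow> 1 | Some s \<Rightarrow> t s)"

definition W :: "nat \<Rightarrow> nat set \<Rightarrow> (nat \<times> nat) list \<Rightarrow> (nat \<Rightarrow> 'a::comm_ring_1) \<Rightarrow> 'a" where
  "W n T L t = (\<Prod>q\<in>{..<n} - T. fvw t (snd (foldl (qstep n T) (\<lambda>_. None, \<lambda>_. None) L) q))"

abbreviation st0 :: "word \<times> word" where "st0 \<equiv> (\<lambda>_. None, \<lambda>_. None)"

lemma prod_reindex_del:
  assumes jn: "j < n" and R: "Rel n j T st st'"
  shows "(\<Prod>q\<in>{..<n} - T - {j}. fvw t (snd st q)) = (\<Prod>b\<in>{..<n - 1} - Tdel j T. fvw t (snd st' b))"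
proof (rule prod.reindex_bij_witness[where i="undel j" and j="del j"])
  fix a assume a: "a \<in> {..<n} - T - {j}"
  show "undel j (del j a) = a" using a by (simp add: undel_del)
  show "del j a \<in> {..<n - 1} - Tdel j T" using a del_lt[OF jn] Tdel_iff[of a j T] by auto
  show "fvw t (snd st' (del j a)) = fvw t (snd st a)" using a R by (simp add: Rel_def)
next
  fix b assume b: "b \<in> {..<n - 1} - Tdel j T"
  show "del j (undel j b) = b" by (rule del_undel)
  show "undel j b \<in> {..<n} - T - {j}"
    using b undel_lt[of b n j] undel_ne[of j b] Tdel_iff[of "undel j b" j T] del_undel[of j b] by auto
qed

lemma first_step_in:
  assumes jn: "j < n" and jT: "j \<in> T"
  shows "qstep n T st0 (s, j) = ((\<lambda>_. None)(j := Some s), (\<lambda>q. if q = j then Some s else None))"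
proof -
  have S: "stop_index n T (\<lambda>_. None) j = Some 0"
    by (rule stop_index_SomeI) (use jn jT in \<open>auto simp: free_def\<close>)
  have "visited n T (\<lambda>_. None) j = {j}" unfolding visited_Some[OF S] using jn by auto
  thus ?thesis unfolding qstep_eq S using jn by auto
qed

lemma W_in:
  assumes n2: "2 \<le> n" and jn: "j < n" and jT: "j \<in> T" and sites: "\<forall>p\<in>set L. snd p < n"
  shows "W n T ((s, j) # L) t = W (n - 1) (Tdel j T) (map (\<lambda>p. (fst p, dl n j (snd p))) L) t"
proof -
  have R0: "Rel n j T (qstep n T st0 (s, j)) st0"
    unfolding first_step_in[OF jn jT] by (simp add: Rel_def free_def)
  have R: "Rel n j T (foldl (qstep n T) st0 ((s, j) # L)) (foldl (qstep (n - 1) (Tdel j T)) st0 (map (\<lambda>p. (fst p, dl n j (snd p))) L))"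
    using fold_sim[OF n2 jn sites R0] by simp
  have "{..<n} - T - {j} = {..<n} - T" using jT by auto
  thus ?thesis unfolding W_def using prod_reindex_del[OF jn R, of t] by simp
qed

lemma W_out:
  assumes n2: "2 \<le> n" and jn: "j < n" and jT: "j \<notin> T" and sites: "\<forall>p\<in>set L. snd p < n"
  shows "W n T ((s, j) # L) t = t s * W (n - 1) (Tdel j T) (map (\<lambda>p. (fst p, dl n j (snd p))) ((s, j) # L)) t"
proof -
  have R0: "Rel n j T st0 st0" using jT by (simp add: Rel_def free_def)
  have sites': "\<forall>p\<in>set ((s, j) # L). snd p < n" using sites jn by simp
  note R = fold_sim[OF n2 jn sites' R0]
  have "snd (qstep n T st0 (s, j)) j = Some s" using fv_start[of n j T "\<lambda>_. None" "\<lambda>_. None" s] jn by simp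
  hence fj: "snd (foldl (qstep n T) st0 ((s, j) # L)) j = Some s" using fv_keep by simp
  have "(\<Prod>q\<in>{..<n} - T. fvw t (snd (foldl (qstep n T) st0 ((s, j) # L)) q))
     = fvw t (snd (foldl (qstep n T) st0 ((s, j) # L)) j) * (\<Prod>q\<in>{..<n} - T - {j}. fvw t (snd (foldl (qstep n T) st0 ((s, j) # L)) q))"
    by (rule prod.remove) (use jn jT in auto)
  thus ?thesis unfolding W_def using prod_reindex_del[OF jn R, of t] fj by (simp add: fvw_def)
qed


fun hc :: "nat \<Rightarrow> 'a::comm_ring_1 list \<Rightarrow> 'a" where
  "hc e [] = (if e = 0 then 1 else 0)"
| "hc e (x # xs) = (\<Sum>i\<le>e. x ^ i * hc (e - i) xs)"

lemma hc_0: "hc 0 xs = 1"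
  by (induction xs) auto

lemma hc_Suc: "hc (Suc e) (x # xs) = hc (Suc e) xs + x * hc e (x # xs)"
proof -
  have "hc (Suc e) (x # xs) = (\<Sum>i\<le>Suc e. x ^ i * hc (Suc e - i) xs)" by simp
  also have "\<dots> = hc (Suc e) xs + (\<Sum>i\<le>e. x ^ Suc i * hc (Suc e - Suc i) xs)"
    by (subst sum.atMost_Suc_shift) simp
  also have "(\<Sum>i\<le>e. x ^ Suc i * hc (Suc e - Suc i) xs) = x * hc e (x # xs)"
    by (simp add: sum_distrib_left mult.assoc)
  finally show ?thesis .
qed

definition TS :: "nat \<Rightarrow> nat \<Rightarrow> nat set set" where
  "TS n c = {T. T \<subseteq> {..<n} \<and> card T = c}"

lemma finite_TS: "finite (TS n c)"
proof -
  have "TS n c \<subseteq> Pow {..<n}" by (auto simp: TS_def)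
  thus ?thesis by (rule finite_subset) simp
qed

lemma inj_del: "inj_on (del j) (A - {j})"
  by (rule inj_onI) (auto intro: del_inj)

lemma inj_undel: "inj_on (undel j) A"
proof (rule inj_onI)
  fix x y assume "undel j x = undel j y"
  hence "del j (undel j x) = del j (undel j y)" by simp
  thus "x = y" by (simp add: del_undel)
qed

lemma undel_Tdel: "undel j ` Tdel j T = T - {j}"
proof
  show "undel j ` Tdel j T \<subseteq> T - {j}" unfolding Tdel_def by (auto simp: undel_del)
  show "T - {j} \<subseteq> undel j ` Tdel j T"
  proof
    fix q assume q: "q \<in> T - {j}"
    hence "q = undel j (del j q)" by (simp add: undel_del)
    moreover have "del j q \<in> Tdel j T" using q by (simp add: Tdel_def)
    ultimately show "q \<in> undel j ` Tdel j T" by blast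
  qed
qed

lemma j_notin_undel: "j \<notin> undel j ` A"
proof
  assume "j \<in> undel j ` A"
  then obtain x where "j = undel j x" by blast
  thus False using undel_ne[of j x] by simp
qed

lemma Tdel_undel: "Tdel j (undel j ` A) = A"
proof -
  have "undel j ` A - {j} = undel j ` A" using j_notin_undel[of j A] by simp
  hence "Tdel j (undel j ` A) = (\<lambda>x. del j (undel j x)) ` A" unfolding Tdel_def by (simp add: image_image)
  also have "\<dots> = A" by (simp add: del_undel)
  finally show ?thesis .
qed

lemma Tdel_insert: "Tdel j (insert j A) = Tdel j A"
  by (simp add: Tdel_def)

lemma card_Tdel: "finite T \<Longrightarrow> card (Tdel j T) = card (T - {j})"
  unfolding Tdel_def by (rule card_image[OF inj_del])

lemma Tdel_sub: "j < n \<Longrightarrow> T \<subseteq> {..<n} \<Longrightarrow> Tdel j T \<subseteq> {..<n - 1}"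
proof
  fix x assume "j < n" "T \<subseteq> {..<n}" "x \<in> Tdel j T"
  then obtain q where "q \<in> T" "q \<noteq> j" "x = del j q" unfolding Tdel_def by blast
  thus "x \<in> {..<n - 1}" using del_lt[of j n q] \<open>j < n\<close> \<open>T \<subseteq> {..<n}\<close> by auto
qed

lemma undel_sub: "A \<subseteq> {..<n - 1} \<Longrightarrow> undel j ` A \<subseteq> {..<n}"
proof
  fix x assume "A \<subseteq> {..<n - 1}" "x \<in> undel j ` A"
  then obtain q where "q \<in> A" "x = undel j q" by blast
  thus "x \<in> {..<n}" using undel_lt[of q n j] \<open>A \<subseteq> {..<n - 1}\<close> by auto
qed


lemma sum_TS_in:
  assumes jn: "j < n" and c: "1 \<le> c"
  shows "(\<Sum>T\<in>{T\<in>TS n c. j \<in> T}. g (Tdel j T)) = (\<Sum>T'\<in>TS (n - 1) (c - 1). g T')"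
proof (rule sum.reindex_bij_witness[where i="\<lambda>A. insert j (undel j ` A)" and j="Tdel j"])
  fix T assume T: "T \<in> {T\<in>TS n c. j \<in> T}"
  hence fT: "finite T" by (auto simp: TS_def intro: finite_subset)
  show "insert j (undel j ` Tdel j T) = T" using T by (auto simp: undel_Tdel)
  show "Tdel j T \<in> TS (n - 1) (c - 1)" using T fT jn Tdel_sub[OF jn] by (auto simp: TS_def card_Tdel)
next
  fix A assume A: "A \<in> TS (n - 1) (c - 1)"
  hence fA: "finite A" by (auto simp: TS_def intro: finite_subset)
  show "Tdel j (insert j (undel j ` A)) = A" by (simp add: Tdel_insert Tdel_undel)
  have "card (undel j ` A) = c - 1" using A card_image[OF inj_undel] by (simp add: TS_def)
  moreover have "j \<notin> undel j ` A" by (rule j_notin_undel)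
  ultimately have "card (insert j (undel j ` A)) = c" using fA c by simp
  moreover have "A \<subseteq> {..<n - 1}" using A by (simp add: TS_def)
  hence "insert j (undel j ` A) \<subseteq> {..<n}" using undel_sub[of A n j] jn by simp
  ultimately show "insert j (undel j ` A) \<in> {T\<in>TS n c. j \<in> T}" by (simp add: TS_def)
qed simp

lemma sum_TS_out:
  assumes jn: "j < n"
  shows "(\<Sum>T\<in>{T\<in>TS n c. j \<notin> T}. g (Tdel j T)) = (\<Sum>T'\<in>TS (n - 1) c. g T')"
proof (rule sum.reindex_bij_witness[where i="\<lambda>A. undel j ` A" and j="Tdel j"])
  fix T assume T: "T \<in> {T\<in>TS n c. j \<notin> T}"
  hence fT: "finite T" by (auto simp: TS_def intro: finite_subset)
  show "undel j ` Tdel j T = T" using T by (auto simp: undel_Tdel)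
  show "Tdel j T \<in> TS (n - 1) c" using T fT jn Tdel_sub[OF jn] by (auto simp: TS_def card_Tdel)
next
  fix A assume A: "A \<in> TS (n - 1) c"
  show "Tdel j (undel j ` A) = A" by (simp add: Tdel_undel)
  have "card (undel j ` A) = c" using A card_image[OF inj_undel] by (simp add: TS_def)
  moreover have "j \<notin> undel j ` A" by (rule j_notin_undel)
  moreover have "A \<subseteq> {..<n - 1}" using A by (simp add: TS_def)
  hence "undel j ` A \<subseteq> {..<n}" using undel_sub[of A n j] by simp
  ultimately show "undel j ` A \<in> {T\<in>TS n c. j \<notin> T}" by (simp add: TS_def)
qed simp


lemma TS_0: "TS n 0 = {{}}"
proof -
  have "T = {}" if "T \<subseteq> {..<n}" "card T = 0" for T :: "nat set"
    using that finite_subset[OF that(1)] by simp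
  thus ?thesis unfolding TS_def by auto
qed

lemma TS_n: "TS n n = {{..<n}}"
proof -
  have "T = {..<n}" if "T \<subseteq> {..<n}" "card T = n" for T :: "nat set"
    using card_subset_eq[OF _ that(1)] that(2) by simp
  thus ?thesis unfolding TS_def by auto
qed

lemma dl_lt: "2 \<le> n \<Longrightarrow> j < n \<Longrightarrow> a < n \<Longrightarrow> dl n j a < n - 1"
  using a1_props[of n j] del_lt[of j n] by (auto simp: dl_def)

lemma TS_split: "(\<Sum>T\<in>TS n c. g T) = (\<Sum>T\<in>{T\<in>TS n c. j \<in> T}. g T) + (\<Sum>T\<in>{T\<in>TS n c. j \<notin> T}. g T)"
proof -
  have "TS n c = {T\<in>TS n c. j \<in> T} \<union> {T\<in>TS n c. j \<notin> T}" by auto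
  moreover have "finite {T\<in>TS n c. j \<in> T}" "finite {T\<in>TS n c. j \<notin> T}" using finite_TS by auto
  moreover have "{T\<in>TS n c. j \<in> T} \<inter> {T\<in>TS n c. j \<notin> T} = {}" by auto
  ultimately show ?thesis using sum.union_disjoint[of "{T\<in>TS n c. j \<in> T}" "{T\<in>TS n c. j \<notin> T}" g] by simp
qed



lemma rec_P1:
  assumes n2: "2 \<le> n" and jn: "j < n" and c1: "1 \<le> c" and cn: "c \<le> n"
    and sitesr: "\<forall>p\<in>set rest. snd p < n" and len: "c \<le> length rest"
    and IH: "\<And>L c. (\<forall>p\<in>set L. snd p < n - 1) \<Longrightarrow> c \<le> n - 1 \<Longrightarrow> c < length L \<Longrightarrow>
       (\<Sum>T\<in>TS (n - 1) c. W (n - 1) T L t) = hc (n - 1 - c) (map (t \<circ> fst) (take (Suc c) L))"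
  shows "(\<Sum>T\<in>{T\<in>TS n c. j \<in> T}. W n T ((s, j) # rest) t) = hc (n - c) (map (t \<circ> fst) (take c rest))"
proof -
  define L1 where "L1 = map (\<lambda>p. (fst p, dl n j (snd p))) rest"
  have s1: "\<forall>p\<in>set L1. snd p < n - 1" using dl_lt[OF n2 jn] sitesr by (auto simp: L1_def)
  have "(\<Sum>T\<in>{T\<in>TS n c. j \<in> T}. W n T ((s, j) # rest) t) = (\<Sum>T\<in>{T\<in>TS n c. j \<in> T}. W (n - 1) (Tdel j T) L1 t)"
  proof (rule sum.cong[OF refl])
    fix T assume "T \<in> {T\<in>TS n c. j \<in> T}"
    hence "j \<in> T" by simp
    thus "W n T ((s, j) # rest) t = W (n - 1) (Tdel j T) L1 t"
      unfolding L1_def by (rule W_in[OF n2 jn _ sitesr])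
  qed
  also have "\<dots> = (\<Sum>T'\<in>TS (n - 1) (c - 1). W (n - 1) T' L1 t)"
    by (rule sum_TS_in[OF jn c1])
  also have "\<dots> = hc (n - 1 - (c - 1)) (map (t \<circ> fst) (take (Suc (c - 1)) L1))"
  proof (rule IH[OF s1])
    show "c - 1 \<le> n - 1" using cn by simp
    show "c - 1 < length L1" using len c1 by (simp add: L1_def)
  qed
  also have "n - 1 - (c - 1) = n - c" using c1 cn by simp
  also have "Suc (c - 1) = c" using c1 by simp
  also have "map (t \<circ> fst) (take c L1) = map (t \<circ> fst) (take c rest)"
    by (simp add: L1_def take_map)
  finally show ?thesis .
qed

lemma rec_P2:
  assumes n2: "2 \<le> n" and jn: "j < n" and cn: "c < n"
    and sitesr: "\<forall>p\<in>set rest. snd p < n" and len: "c \<le> length rest"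
    and IH: "\<And>L c. (\<forall>p\<in>set L. snd p < n - 1) \<Longrightarrow> c \<le> n - 1 \<Longrightarrow> c < length L \<Longrightarrow>
       (\<Sum>T\<in>TS (n - 1) c. W (n - 1) T L t) = hc (n - 1 - c) (map (t \<circ> fst) (take (Suc c) L))"
  shows "(\<Sum>T\<in>{T\<in>TS n c. j \<notin> T}. W n T ((s, j) # rest) t) = t s * hc (n - 1 - c) (map (t \<circ> fst) (take (Suc c) ((s, j) # rest)))"
proof -
  define L2 where "L2 = map (\<lambda>p. (fst p, dl n j (snd p))) ((s, j) # rest)"
  have s2: "\<forall>p\<in>set L2. snd p < n - 1" using dl_lt[OF n2 jn] sitesr jn by (auto simp: L2_def)
  have "(\<Sum>T\<in>{T\<in>TS n c. j \<notin> T}. W n T ((s, j) # rest) t) = (\<Sum>T\<in>{T\<in>TS n c. j \<notin> T}. t s * W (n - 1) (Tdel j T) L2 t)"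
  proof (rule sum.cong[OF refl])
    fix T assume "T \<in> {T\<in>TS n c. j \<notin> T}"
    hence "j \<notin> T" by simp
    thus "W n T ((s, j) # rest) t = t s * W (n - 1) (Tdel j T) L2 t"
      unfolding L2_def by (rule W_out[OF n2 jn _ sitesr])
  qed
  also have "\<dots> = (\<Sum>T'\<in>TS (n - 1) c. t s * W (n - 1) T' L2 t)"
    by (rule sum_TS_out[OF jn])
  also have "\<dots> = t s * (\<Sum>T'\<in>TS (n - 1) c. W (n - 1) T' L2 t)"
    by (simp add: sum_distrib_left)
  also have "(\<Sum>T'\<in>TS (n - 1) c. W (n - 1) T' L2 t) = hc (n - 1 - c) (map (t \<circ> fst) (take (Suc c) L2))"
  proof (rule IH[OF s2])
    show "c \<le> n - 1" using cn by simp
    show "c < length L2" using len by (simp add: L2_def)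
  qed
  also have "map (t \<circ> fst) (take (Suc c) L2) = map (t \<circ> fst) (take (Suc c) ((s, j) # rest))"
    unfolding L2_def take_map by simp
  finally show ?thesis .
qed


lemma main_rec:
  "1 \<le> n \<Longrightarrow> (\<forall>p\<in>set L. snd p < n) \<Longrightarrow> c \<le> n \<Longrightarrow> c < length L \<Longrightarrow>
   (\<Sum>T\<in>TS n c. W n T L t) = hc (n - c) (map (t \<circ> fst) (take (Suc c) L))"
proof (induction n arbitrary: L c)
  case 0 thus ?case by simp
next
  case (Suc n')
  obtain s j rest where L: "L = (s, j) # rest" using Suc.prems(4) by (cases L) auto
  have jn: "j < Suc n'" using Suc.prems(2) L by simp
  have sitesr: "\<forall>p\<in>set rest. snd p < Suc n'" using Suc.prems(2) L by simp
  have len: "c \<le> length rest" using Suc.prems(4) L by simp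
  show ?case
  proof (cases "n' = 0")
    case True
    hence j0: "j = 0" using jn by simp
    have "c = 0 \<or> c = 1" using Suc.prems(3) True by auto
    thus ?thesis
    proof
      assume c: "c = 1"
      have "W 1 {..<1} L t = 1" by (simp add: W_def)
      thus ?thesis using TS_n[of 1] c True by (simp add: hc_0)
    next
      assume c: "c = 0"
      have "snd (qstep 1 {} st0 (s, 0)) 0 = Some s" using fv_start[of 1 0 "{}" "\<lambda>_. None" "\<lambda>_. None" s] by simp
      hence "snd (foldl (qstep 1 {}) st0 L) 0 = Some s" using fv_keep L j0 by simp
      hence "W 1 {} L t = t s" by (simp add: W_def fvw_def lessThan_Suc)
      thus ?thesis using TS_0[of 1] c True L by simp
    qed
  next
    case False
    define n where "n = Suc n'"
    have n2: "2 \<le> n" using False by (simp add: n_def)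
    have IH: "\<And>L c. (\<forall>p\<in>set L. snd p < n - 1) \<Longrightarrow> c \<le> n - 1 \<Longrightarrow> c < length L \<Longrightarrow>
       (\<Sum>T\<in>TS (n - 1) c. W (n - 1) T L t) = hc (n - 1 - c) (map (t \<circ> fst) (take (Suc c) L))"
    proof -
      fix L :: "(nat \<times> nat) list" and c
      assume a: "\<forall>p\<in>set L. snd p < n - 1" "c \<le> n - 1" "c < length L"
      have n'1: "1 \<le> n'" using False by simp
      have nn: "n - 1 = n'" by (simp add: n_def)
      show "(\<Sum>T\<in>TS (n - 1) c. W (n - 1) T L t) = hc (n - 1 - c) (map (t \<circ> fst) (take (Suc c) L))"
        unfolding nn by (rule Suc.IH[OF n'1]) (use a nn in simp_all)
    qed
    have jn': "j < n" and sitesr': "\<forall>p\<in>set rest. snd p < n" and cn: "c \<le> n"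
      using jn sitesr Suc.prems(3) by (simp_all add: n_def)
    define xs where "xs = map (t \<circ> fst) (take c rest)"
    have tgt: "map (t \<circ> fst) (take (Suc c) L) = t s # xs" by (simp add: L xs_def)
    have P1: "(\<Sum>T\<in>{T\<in>TS n c. j \<in> T}. W n T L t) = (if 1 \<le> c then hc (n - c) xs else 0)"
    proof (cases "1 \<le> c")
      case True
      note r = rec_P1[OF n2 jn' True cn sitesr' len, of t s]
      note r2 = r[OF IH]
      have "(\<Sum>T\<in>{T\<in>TS n c. j \<in> T}. W n T L t) = hc (n - c) xs"
        by (simp only: L xs_def r2)
      thus ?thesis using True by (simp only: if_P)
    next
      case False
      hence "c = 0" by simp
      hence "{T\<in>TS n c. j \<in> T} = {}" using TS_0[of n] by simp
      thus ?thesis using False by (simp only: if_not_P if_False sum.empty)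
    qed
    have P2: "(\<Sum>T\<in>{T\<in>TS n c. j \<notin> T}. W n T L t) = (if c < n then t s * hc (n - c - 1) (t s # xs) else 0)"
    proof (cases "c < n")
      case True
      have "(\<Sum>T\<in>{T\<in>TS n c. j \<notin> T}. W n T L t) = t s * hc (n - 1 - c) (t s # xs)"
        unfolding L tgt[unfolded L, symmetric] by (rule rec_P2[OF n2 jn' True sitesr' len IH])
      thus ?thesis using True by simp
    next
      case False
      hence "c = n" using Suc.prems(3) by (simp add: n_def)
      hence "{T\<in>TS n c. j \<notin> T} = {}" using TS_n[of n] jn' by simp
      thus ?thesis using False by (simp only: if_not_P if_False sum.empty)
    qed
    have "(\<Sum>T\<in>TS n c. W n T L t) = (if 1 \<le> c then hc (n - c) xs else 0) + (if c < n then t s * hc (n - c - 1) (t s # xs) else 0)"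
      using TS_split[where g="\<lambda>T. W n T L t" and n=n and c=c and j=j] P1 P2 by simp
    also have "\<dots> = hc (n - c) (t s # xs)"
    proof (cases "c < n")
      case True
      then obtain e where e: "n - c = Suc e" by (metis Suc_diff_Suc)
      have "hc (n - c) (t s # xs) = hc (n - c) xs + t s * hc e (t s # xs)" unfolding e by (rule hc_Suc)
      moreover have "\<not> 1 \<le> c \<Longrightarrow> hc (n - c) xs = 0"
      proof -
        assume "\<not> 1 \<le> c"
        hence "c = 0" by simp
        thus "hc (n - c) xs = 0" using e by (simp add: xs_def)
      qed
      moreover have "n - c - 1 = e" using e by simp
      ultimately show ?thesis using True by auto
    next
      case False
      hence "c = n" using Suc.prems(3) by (simp add: n_def)
      thus ?thesis using n2 by (simp add: hc_0)
    qed
    finally show ?thesis unfolding tgt[symmetric] n_def .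
  qed
qed


definition AF :: "nat \<Rightarrow> nat \<Rightarrow> (nat \<Rightarrow> nat) set" where
  "AF l e = {a. (\<forall>k\<ge>l. a k = 0) \<and> (\<Sum>k<l. a k) = e}"

definition cons_fun :: "nat \<Rightarrow> (nat \<Rightarrow> nat) \<Rightarrow> nat \<Rightarrow> nat" where
  "cons_fun i b = (\<lambda>k. case k of 0 \<Rightarrow> i | Suc k' \<Rightarrow> b k')"

lemma cons_fun_simps [simp]: "cons_fun i b 0 = i" "cons_fun i b (Suc k) = b k"
  by (simp_all add: cons_fun_def)

lemma cons_fun_eta: "cons_fun (a 0) (\<lambda>k. a (Suc k)) = a"
  by (rule ext) (simp add: cons_fun_def split: nat.split)

lemma cons_fun_inj: "cons_fun i b = cons_fun i' b' \<Longrightarrow> i = i' \<and> b = b'"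
proof -
  assume h: "cons_fun i b = cons_fun i' b'"
  have "i = i'" using fun_cong[OF h, of 0] by simp
  moreover have "b = b'"
  proof
    fix k show "b k = b' k" using fun_cong[OF h, of "Suc k"] by simp
  qed
  ultimately show ?thesis by simp
qed

lemma AF_0: "AF 0 e = (if e = 0 then {\<lambda>_. 0} else {})"
  by (auto simp: AF_def)

lemma AF_Suc: "AF (Suc l) e = (\<lambda>p. cons_fun (fst p) (snd p)) ` (SIGMA i:{..e}. AF l (e - i))"
proof
  show "AF (Suc l) e \<subseteq> (\<lambda>p. cons_fun (fst p) (snd p)) ` (SIGMA i:{..e}. AF l (e - i))"
  proof
    fix a assume a: "a \<in> AF (Suc l) e"
    have s: "(\<Sum>k<Suc l. a k) = a 0 + (\<Sum>k<l. a (Suc k))" by (rule sum.lessThan_Suc_shift)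
    have "(\<lambda>k. a (Suc k)) \<in> AF l (e - a 0)" using a s by (auto simp: AF_def)
    moreover have "a 0 \<le> e" using a s by (auto simp: AF_def)
    ultimately have "(a 0, \<lambda>k. a (Suc k)) \<in> (SIGMA i:{..e}. AF l (e - i))" by simp
    moreover have "a = cons_fun (a 0) (\<lambda>k. a (Suc k))" by (simp add: cons_fun_eta)
    ultimately show "a \<in> (\<lambda>p. cons_fun (fst p) (snd p)) ` (SIGMA i:{..e}. AF l (e - i))"
      by (metis (no_types, lifting) fst_conv snd_conv image_eqI)
  qed
  show "(\<lambda>p. cons_fun (fst p) (snd p)) ` (SIGMA i:{..e}. AF l (e - i)) \<subseteq> AF (Suc l) e"
  proof
    fix a assume "a \<in> (\<lambda>p. cons_fun (fst p) (snd p)) ` (SIGMA i:{..e}. AF l (e - i))"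
    then obtain i b where ib: "i \<le> e" "b \<in> AF l (e - i)" "a = cons_fun i b" by auto
    have "\<forall>k\<ge>Suc l. a k = 0"
    proof (intro allI impI)
      fix k assume "Suc l \<le> k"
      then obtain k' where "k = Suc k'" "l \<le> k'" by (cases k) auto
      thus "a k = 0" using ib by (simp add: AF_def)
    qed
    moreover have "(\<Sum>k<Suc l. a k) = e"
      using ib by (subst sum.lessThan_Suc_shift) (simp add: AF_def)
    ultimately show "a \<in> AF (Suc l) e" by (simp add: AF_def)
  qed
qed

lemma finite_AF: "finite (AF l e)"
proof (induction l arbitrary: e)
  case 0 thus ?case by (simp add: AF_0)
next
  case (Suc l)
  show ?case unfolding AF_Suc by (intro finite_imageI finite_SigmaI) (simp_all add: Suc.IH)
qed

lemma complete_hom_alt: "complete_hom e xs = (\<Sum>a\<in>AF (length xs) e. \<Prod>k<length xs. xs ! k ^ a k)"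
  by (simp add: complete_hom_def AF_def)

lemma complete_hom_Nil: "complete_hom e [] = (if e = 0 then 1 else 0)"
  by (simp add: complete_hom_alt AF_0)

lemma complete_hom_Cons: "complete_hom e (x # xs) = (\<Sum>i\<le>e. x ^ i * complete_hom (e - i) xs)"
proof -
  let ?l = "length xs"
  let ?g = "\<lambda>a. \<Prod>k<Suc ?l. (x # xs) ! k ^ a k"
  have inj: "inj_on (\<lambda>p. cons_fun (fst p) (snd p)) (SIGMA i:{..e}. AF ?l (e - i))"
    by (rule inj_onI) (auto dest: cons_fun_inj)
  have "complete_hom e (x # xs) = (\<Sum>a\<in>AF (Suc ?l) e. ?g a)" by (simp add: complete_hom_alt)
  also have "\<dots> = (\<Sum>p\<in>(SIGMA i:{..e}. AF ?l (e - i)). ?g (cons_fun (fst p) (snd p)))"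
    unfolding AF_Suc by (rule sum.reindex[OF inj, unfolded comp_def])
  also have "\<dots> = (\<Sum>p\<in>(SIGMA i:{..e}. AF ?l (e - i)). x ^ fst p * (\<Prod>k<?l. xs ! k ^ snd p k))"
    by (rule sum.cong[OF refl]) (subst prod.lessThan_Suc_shift, simp)
  also have "\<dots> = (\<Sum>i\<le>e. \<Sum>b\<in>AF ?l (e - i). x ^ i * (\<Prod>k<?l. xs ! k ^ b k))"
    by (subst sum.Sigma) (simp_all add: finite_AF split_def)
  also have "\<dots> = (\<Sum>i\<le>e. x ^ i * complete_hom (e - i) xs)"
    by (simp add: complete_hom_alt sum_distrib_left)
  finally show ?thesis .
qed

lemma complete_hom_hc: "complete_hom e xs = hc e xs"
  by (induction xs arbitrary: e) (simp_all add: complete_hom_Nil complete_hom_Cons)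


definition OM :: "nat set \<Rightarrow> word \<Rightarrow> nat multiset" where
  "OM T occ = (\<Sum>q\<in>T. (case occ q of None \<Rightarrow> {#} | Some s \<Rightarrow> {#s#}))"

lemma fst_qstep: "fst (qstep n T st (s, a)) =
  (case stop_index n T (fst st) a of Some k0 \<Rightarrow> (fst st)((a + k0) mod n := Some s) | None \<Rightarrow> fst st)"
proof -
  have "fst (qstep n T (fst st, snd st) (s, a)) =
    (case stop_index n T (fst st) a of Some k0 \<Rightarrow> (fst st)((a + k0) mod n := Some s) | None \<Rightarrow> fst st)"
    by (simp only: qstep_eq fst_conv)
  thus ?thesis by simp
qed

lemma OM_upd:
  assumes "finite T" "q0 \<in> T" "occ q0 = None"
  shows "OM T (occ(q0 := Some s)) = OM T occ + {#s#}"
proof -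
  have A: "OM T (occ(q0 := Some s)) = {#s#} + (\<Sum>q\<in>T - {q0}. (case (occ(q0 := Some s)) q of None \<Rightarrow> {#} | Some s \<Rightarrow> {#s#}))"
    unfolding OM_def using assms by (subst sum.remove[of T q0]) auto
  have B: "(\<Sum>q\<in>T - {q0}. (case (occ(q0 := Some s)) q of None \<Rightarrow> {#} | Some s \<Rightarrow> {#s#}))
     = (\<Sum>q\<in>T - {q0}. (case occ q of None \<Rightarrow> {#} | Some s \<Rightarrow> {#s#}))"
    by (rule sum.cong) auto
  have C: "OM T occ = (\<Sum>q\<in>T - {q0}. (case occ q of None \<Rightarrow> {#} | Some s \<Rightarrow> {#s#}))"
    unfolding OM_def using assms by (subst sum.remove[of T q0]) auto
  show ?thesis unfolding A B C by (simp only: add.commute)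
qed

lemma occ_inv:
  assumes Tn: "T \<subseteq> {..<n}" and cT: "card T = c" and n0: "0 < n"
  shows "(\<forall>p\<in>set L. snd p < n) \<Longrightarrow>
    OM T (fst (foldl (qstep n T) st0 L)) = mset (take c (map fst L)) \<and>
    card {q\<in>T. fst (foldl (qstep n T) st0 L) q \<noteq> None} = min c (length L)"
proof (induction L rule: rev_induct)
  case Nil
  show ?case by (simp add: OM_def)
next
  case (snoc p L)
  obtain s a where p: "p = (s, a)" by (cases p)
  have an: "a < n" using snoc.prems p by simp
  have fT: "finite T" using Tn finite_subset by blast
  define occ where "occ = fst (foldl (qstep n T) st0 L)"
  have IH: "OM T occ = mset (take c (map fst L))" "card {q\<in>T. occ q \<noteq> None} = min c (length L)"
    using snoc.IH snoc.prems by (simp_all add: occ_def)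
  have F: "fst (foldl (qstep n T) st0 (L @ [p])) =
     (case stop_index n T occ a of Some k0 \<Rightarrow> occ((a + k0) mod n := Some s) | None \<Rightarrow> occ)"
    unfolding occ_def using fst_qstep[of n T "foldl (qstep n T) st0 L" s a] by (simp add: p)
  show ?case
  proof (cases "length L < c")
    case True
    have "{q\<in>T. occ q \<noteq> None} \<noteq> T" using IH(2) True cT by auto
    then obtain q where q: "q \<in> T" "occ q = None" by auto
    have "q < n" using q Tn by auto
    then obtain k where k: "k < n" "(a + k) mod n = q" using walk_hit[OF n0] by blast
    have "stop_index n T occ a \<noteq> None"
    proof
      assume "stop_index n T occ a = None"
      from stop_index_NoneD[OF this k(1)] show False using k q by (simp add: free_def)
    qed
    then obtain k0 where S: "stop_index n T occ a = Some k0" by auto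
    define q0 where "q0 = (a + k0) mod n"
    have q0: "q0 \<in> T" "occ q0 = None" using stop_index_SomeD[OF S] by (simp_all add: free_def q0_def)
    have F': "fst (foldl (qstep n T) st0 (L @ [p])) = occ(q0 := Some s)" using F S by (simp add: q0_def)
    have "{q\<in>T. (occ(q0 := Some s)) q \<noteq> None} = insert q0 {q\<in>T. occ q \<noteq> None}" using q0 by auto
    hence cd0: "card {q\<in>T. (occ(q0 := Some s)) q \<noteq> None} = Suc (card {q\<in>T. occ q \<noteq> None})"
      using q0 fT by simp
    have tk: "take c (map fst (L @ [p])) = take c (map fst L) @ [s]" using True p by simp
    have om: "OM T (occ(q0 := Some s)) = mset (take c (map fst (L @ [p])))"
      unfolding OM_upd[of T q0 occ s, OF fT q0] tk IH(1) by simp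
    have cd: "card {q\<in>T. (occ(q0 := Some s)) q \<noteq> None} = min c (length (L @ [p]))"
      unfolding cd0 IH(2) using True by simp
    show ?thesis unfolding F' using om cd by blast
  next
    case False
    have sub: "{q\<in>T. occ q \<noteq> None} \<subseteq> T" by auto
    have "card {q\<in>T. occ q \<noteq> None} = card T" using IH(2) False cT by simp
    hence eq: "{q\<in>T. occ q \<noteq> None} = T" using card_subset_eq[OF fT sub] by simp
    have "stop_index n T occ a = None"
    proof (rule stop_index_NoneI, intro allI impI)
      fix k assume "k < n"
      show "\<not> free T occ ((a + k) mod n)" using eq by (auto simp: free_def)
    qed
    hence F': "fst (foldl (qstep n T) st0 (L @ [p])) = occ" using F by simp
    have "take c (map fst (L @ [p])) = take c (map fst L)" using False p by simp
    thus ?thesis unfolding F' using IH False by simp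
  qed
qed

lemma fv_vals:
  "(\<forall>q v. snd st q = Some v \<longrightarrow> v \<in> A) \<Longrightarrow> (\<forall>p\<in>set L. fst p \<in> A) \<Longrightarrow>
   snd (foldl (qstep n T) st L) q = Some v \<Longrightarrow> v \<in> A"
proof (induction L arbitrary: st)
  case Nil thus ?case by simp
next
  case (Cons p L)
  obtain occ fv where st: "st = (occ, fv)" by (cases st)
  obtain s a where p: "p = (s, a)" by (cases p)
  have "\<forall>q v. snd (qstep n T st p) q = Some v \<longrightarrow> v \<in> A"
    using Cons.prems(1,2) st p by (auto simp: qstep_eq)
  thus ?case using Cons.IH Cons.prems(2,3) by simp
qed

lemma qw_W:
  assumes vals: "\<forall>p\<in>set (particles n i x). fst p \<in> {1..i}"
  shows "queue_weight n T i x t = W n T (particles n i x) t"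
proof -
  define fv where "fv = snd (qrun n T i x)"
  have fvv: "fv q = Some v \<Longrightarrow> v \<in> {1..i}" for q v
    using fv_vals[of st0 "{1..i}" "particles n i x" n T q v] vals by (simp add: fv_def qrun_def)
  define S where "S = {..<n} - T"
  have fS: "finite S" by (simp add: S_def)
  have img: "fv ` S \<subseteq> insert None (Some ` {1..i})"
  proof
    fix y assume "y \<in> fv ` S"
    then obtain q where "y = fv q" by auto
    thus "y \<in> insert None (Some ` {1..i})" using fvv by (cases "fv q") auto
  qed
  have "W n T (particles n i x) t = (\<Prod>q\<in>S. fvw t (fv q))"
    by (simp add: W_def S_def fv_def qrun_def)
  also have "\<dots> = (\<Prod>y\<in>insert None (Some ` {1..i}). \<Prod>q\<in>{q. q \<in> S \<and> fv q = y}. fvw t (fv q))"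
    by (rule prod.group[OF fS _ img, symmetric]) simp
  also have "\<dots> = (\<Prod>q\<in>{q. q \<in> S \<and> fv q = None}. fvw t (fv q)) * (\<Prod>y\<in>Some ` {1..i}. \<Prod>q\<in>{q. q \<in> S \<and> fv q = y}. fvw t (fv q))"
    by (rule prod.insert) auto
  also have "(\<Prod>q\<in>{q. q \<in> S \<and> fv q = None}. fvw t (fv q)) = 1"
    by (rule prod.neutral) (simp add: fvw_def)
  also have "(\<Prod>y\<in>Some ` {1..i}. \<Prod>q\<in>{q. q \<in> S \<and> fv q = y}. fvw t (fv q))
      = (\<Prod>s\<in>{1..i}. \<Prod>q\<in>{q. q \<in> S \<and> fv q = Some s}. fvw t (fv q))"
    by (rule prod.reindex[unfolded comp_def]) simp
  also have "\<dots> = (\<Prod>s\<in>{1..i}. t s ^ alpha n T i x s)"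
  proof (rule prod.cong[OF refl])
    fix s
    have c0: "(\<Prod>q\<in>{q. q \<in> S \<and> fv q = Some s}. fvw t (fv q)) = (\<Prod>q\<in>{q. q \<in> S \<and> fv q = Some s}. t s)"
      by (rule prod.cong) (auto simp: fvw_def)
    have c1: "(\<Prod>q\<in>{q. q \<in> S \<and> fv q = Some s}. fvw t (fv q)) = t s ^ card {q. q \<in> S \<and> fv q = Some s}"
      unfolding c0 by simp
    have c2: "{q. q \<in> S \<and> fv q = Some s} = {q. q < n \<and> q \<notin> T \<and> snd (qrun n T i x) q = Some s}"
      by (auto simp: S_def fv_def)
    show "(\<Prod>q\<in>{q. q \<in> S \<and> fv q = Some s}. fvw t (fv q)) = t s ^ alpha n T i x s"
      unfolding alpha_def c2[symmetric] by (rule c1)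
  qed
  finally show ?thesis by (simp add: queue_weight_def)
qed


definition blocks :: "nat list \<Rightarrow> nat list" where
  "blocks m = concat (map (\<lambda>k. replicate (m ! k) (Suc k)) [0..<length m])"

definition pres :: "word \<Rightarrow> nat \<Rightarrow> nat list" where
  "pres x n = map the (filter (\<lambda>v. v \<noteq> None) (map x [0..<n]))"

definition typw :: "nat \<Rightarrow> nat list \<Rightarrow> word \<Rightarrow> bool" where
  "typw n m x \<longleftrightarrow> (\<forall>q\<ge>n. x q = None) \<and> mset (pres x n) = mset (blocks m)"

lemma blocks_Nil: "blocks [] = []" by (simp add: blocks_def)

lemma blocks_snoc: "blocks (m @ [a]) = blocks m @ replicate a (Suc (length m))"
proof -
  have eq: "map (\<lambda>k. replicate ((m @ [a]) ! k) (Suc k)) [0..<length m] = map (\<lambda>k. replicate (m ! k) (Suc k)) [0..<length m]"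
    by (rule map_cong) (auto simp: nth_append)
  have "blocks (m @ [a]) = concat (map (\<lambda>k. replicate ((m @ [a]) ! k) (Suc k)) [0..<length m] @ [replicate a (Suc (length m))])"
    by (simp add: blocks_def)
  thus ?thesis unfolding eq by (simp add: blocks_def)
qed

lemma blocks_props: "set (blocks m) \<subseteq> {1..length m} \<and> sorted (blocks m) \<and> length (blocks m) = sum_list m"
proof (induction m rule: rev_induct)
  case Nil thus ?case by (simp add: blocks_Nil)
next
  case (snoc a m)
  have "set (blocks (m @ [a])) \<subseteq> {1..length (m @ [a])}" using snoc by (auto simp: blocks_snoc)
  moreover have "sorted (blocks (m @ [a]))" using snoc
    by (auto simp: blocks_snoc sorted_append)
  moreover have "length (blocks (m @ [a])) = sum_list (m @ [a])" using snoc by (simp add: blocks_snoc)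
  ultimately show ?case by blast
qed

lemma pres_Suc: "pres x (Suc n) = pres x n @ (case x n of None \<Rightarrow> [] | Some s \<Rightarrow> [s])"
  by (simp add: pres_def split: option.split)

lemma length_pres: "length (pres x n) \<le> n"
  by (induction n) (simp_all add: pres_def split: option.split)

lemma vals_mset: "mset (map (psize i x) [0..<n]) = mset (pres x n) + replicate_mset (n - length (pres x n)) i"
proof (induction n)
  case 0 thus ?case by (simp add: pres_def)
next
  case (Suc n)
  have le: "length (pres x n) \<le> n" by (rule length_pres)
  show ?case
  proof (cases "x n")
    case None
    have "Suc n - length (pres x n) = Suc (n - length (pres x n))" using le by simp
    thus ?thesis using Suc None by (simp add: pres_Suc psize_def)
  next
    case (Some s)
    thus ?thesis using Suc by (simp add: pres_Suc psize_def)
  qed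
qed

lemma pres_sum: "mset (pres y n) = (\<Sum>q<n. case y q of None \<Rightarrow> {#} | Some s \<Rightarrow> {#s#})"
  by (induction n) (simp_all add: pres_Suc pres_def[of y 0] split: option.split)

lemma map_fst_sort_key: "map fst (sort_key fst ys) = sort (map fst ys)"
  by (rule properties_for_sort[symmetric]) (simp_all add: mset_map)

lemma map_fst_particles: "map fst (particles n i x) = sort (map (psize i x) [0..<n])"
  unfolding particles_def map_fst_sort_key by (simp add: comp_def)

lemma sites_particles: "\<forall>p\<in>set (particles n i x). snd p < n"
  by (auto simp: particles_def)

lemma length_particles: "length (particles n i x) = n"
  by (simp add: particles_def)

lemma sort_vals:
  assumes ty: "typw n m x" and sm: "sum_list m \<le> n"
  shows "map fst (particles n (Suc (length m)) x) = blocks m @ replicate (n - sum_list m) (Suc (length m))"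
proof -
  let ?i = "Suc (length m)"
  note bp = blocks_props[of m]
  have lp: "length (pres x n) = sum_list m"
    using arg_cong[OF conjunct2[OF ty[unfolded typw_def]], of size] bp by simp
  have "sort (map (psize ?i x) [0..<n]) = blocks m @ replicate (n - sum_list m) ?i"
  proof (rule properties_for_sort)
    show "mset (blocks m @ replicate (n - sum_list m) ?i) = mset (map (psize ?i x) [0..<n])"
      unfolding vals_mset lp using ty by (simp add: typw_def)
    show "sorted (blocks m @ replicate (n - sum_list m) ?i)"
      using bp by (auto simp: sorted_append)
  qed
  thus ?thesis by (simp add: map_fst_particles)
qed


lemma take_blocks:
  assumes "a \<le> n - sum_list m"
  shows "take (sum_list m + a) (blocks m @ replicate (n - sum_list m) i) = blocks m @ replicate a i"
  using assms blocks_props[of m] by (simp add: take_append min_def)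

lemma queue_out_typw:
  assumes ty: "typw n m x" and T: "T \<in> TS n (sum_list m + a)" and cn: "sum_list m + a \<le> n" and n0: "0 < n"
  shows "typw n (m @ [a]) (queue_out n T (Suc (length m)) x)"
proof -
  let ?i = "Suc (length m)"
  let ?c = "sum_list m + a"
  let ?L = "particles n ?i x"
  define occ where "occ = fst (qrun n T ?i x)"
  have Tn: "T \<subseteq> {..<n}" and cT: "card T = ?c" using T by (auto simp: TS_def)
  have fT: "finite T" using Tn finite_subset by blast
  have om: "OM T occ = mset (take ?c (map fst ?L))"
    using occ_inv[OF Tn cT n0 sites_particles] by (simp add: occ_def qrun_def)
  have sm: "sum_list m \<le> n" using cn by simp
  have tk: "take ?c (map fst ?L) = blocks (m @ [a])"
    unfolding sort_vals[OF ty sm] blocks_snoc by (rule take_blocks) (use cn in simp)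
  have out: "queue_out n T ?i x = (\<lambda>q. if q \<in> T then occ q else None)"
    unfolding queue_out_def occ_def by (rule refl)
  have "mset (pres (queue_out n T ?i x) n) = (\<Sum>q<n. case (if q \<in> T then occ q else None) of None \<Rightarrow> {#} | Some s \<Rightarrow> {#s#})"
    unfolding out pres_sum ..
  also have "\<dots> = (\<Sum>q<n. if q \<in> T then (case occ q of None \<Rightarrow> {#} | Some s \<Rightarrow> {#s#}) else 0)"
    by (rule sum.cong) auto
  also have "\<dots> = (\<Sum>q\<in>{..<n} \<inter> T. (case occ q of None \<Rightarrow> {#} | Some s \<Rightarrow> {#s#}))"
    by (rule sum.inter_restrict[symmetric]) simp
  also have "{..<n} \<inter> T = T" using Tn by auto
  also have "(\<Sum>q\<in>T. (case occ q of None \<Rightarrow> {#} | Some s \<Rightarrow> {#s#})) = OM T occ" by (simp add: OM_def)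
  finally have "mset (pres (queue_out n T ?i x) n) = mset (blocks (m @ [a]))" unfolding om tk .
  moreover have "\<forall>q\<ge>n. queue_out n T ?i x q = None" using Tn by (auto simp: out)
  ultimately show ?thesis by (simp add: typw_def)
qed

lemma hvars_snoc: "hvars (m @ [a]) t = map t (blocks m @ replicate (Suc a) (Suc (length m)))"
proof -
  have eq: "map (\<lambda>k. replicate ((m @ [a]) ! k + (if k = length (m @ [a]) - 1 then 1 else 0)) (t (Suc k))) [0..<length m]
     = map (\<lambda>k. map t (replicate (m ! k) (Suc k))) [0..<length m]"
    by (rule map_cong) (auto simp: nth_append)
  have "hvars (m @ [a]) t = concat (map (\<lambda>k. replicate ((m @ [a]) ! k + (if k = length (m @ [a]) - 1 then 1 else 0)) (t (Suc k))) [0..<length m]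
      @ [replicate (Suc a) (t (Suc (length m)))])"
    by (simp add: hvars_def)
  also have "\<dots> = concat (map (\<lambda>k. map t (replicate (m ! k) (Suc k))) [0..<length m]) @ replicate (Suc a) (t (Suc (length m)))"
    unfolding eq by simp
  also have "\<dots> = map t (blocks m @ replicate (Suc a) (Suc (length m)))"
    by (simp add: blocks_def map_concat comp_def)
  finally show ?thesis .
qed

lemma particle_vals:
  assumes ty: "typw n m x" and sm: "sum_list m \<le> n"
  shows "\<forall>p\<in>set (particles n (Suc (length m)) x). fst p \<in> {1..Suc (length m)}"
proof
  fix p assume "p \<in> set (particles n (Suc (length m)) x)"
  hence "fst p \<in> set (map fst (particles n (Suc (length m)) x))" by simp
  hence "fst p \<in> set (blocks m @ replicate (n - sum_list m) (Suc (length m)))" unfolding sort_vals[OF ty sm] .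
  thus "fst p \<in> {1..Suc (length m)}" using blocks_props[of m] by auto
qed

lemma last_queue:
  assumes ty: "typw n m x" and cn: "sum_list m + a \<le> n" and n0: "0 < n"
  shows "(\<Sum>T\<in>TS n (sum_list m + a). queue_weight n T (Suc (length m)) x t) = hc (n - (sum_list m + a)) (hvars (m @ [a]) t)"
proof (cases "sum_list m + a = n")
  case True
  have "alpha n {..<n} (Suc (length m)) x s = 0" for s
  proof -
    have "{q. q < n \<and> q \<notin> {..<n} \<and> snd (qrun n {..<n} (Suc (length m)) x) q = Some s} = {}" by auto
    thus ?thesis unfolding alpha_def by (simp only: card.empty)
  qed
  hence "queue_weight n {..<n} (Suc (length m)) x t = 1"
    by (simp add: queue_weight_def)
  thus ?thesis using True TS_n[of n] by (simp add: hc_0)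
next
  case False
  hence clt: "sum_list m + a < n" using cn by simp
  let ?i = "Suc (length m)"
  let ?c = "sum_list m + a"
  let ?L = "particles n ?i x"
  have sm: "sum_list m \<le> n" using cn by simp
  have "(\<Sum>T\<in>TS n ?c. queue_weight n T ?i x t) = (\<Sum>T\<in>TS n ?c. W n T ?L t)"
    by (rule sum.cong[OF refl]) (rule qw_W[OF particle_vals[OF ty sm]])
  also have "\<dots> = hc (n - ?c) (map (t \<circ> fst) (take (Suc ?c) ?L))"
    by (rule main_rec) (use n0 cn clt sites_particles length_particles in auto)
  also have "map (t \<circ> fst) (take (Suc ?c) ?L) = map t (take (sum_list m + Suc a) (map fst ?L))"
    by (simp add: take_map)
  also have "take (sum_list m + Suc a) (map fst ?L) = blocks m @ replicate (Suc a) ?i"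
    unfolding sort_vals[OF ty sm] by (rule take_blocks) (use clt in simp)
  finally show ?thesis by (simp add: hvars_snoc)
qed


fun outs :: "nat \<Rightarrow> nat \<Rightarrow> word \<Rightarrow> nat set list \<Rightarrow> word" where
  "outs n i x [] = x"
| "outs n i x (T # Ts) = outs n (Suc i) (queue_out n T i x) Ts"

lemma outs_snoc: "outs n i x (Ts @ [T]) = queue_out n T (i + length Ts) (outs n i x Ts)"
  by (induction Ts arbitrary: i x) simp_all

lemma mlq_snoc: "mlq_weight n i x (Ts @ [T]) t = mlq_weight n i x Ts t * queue_weight n T (i + length Ts) (outs n i x Ts) t"
  by (induction Ts arbitrary: i x) (simp_all add: mult.assoc)

lemma mlqs_snoc_D:
  assumes "Ts \<in> mlqs n (m @ [a])"
  shows "Ts = butlast Ts @ [last Ts] \<and> butlast Ts \<in> mlqs n m \<and> last Ts \<in> TS n (sum_list m + a)"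
proof -
  have len: "length Ts = Suc (length m)" using assms by (simp add: mlqs_def)
  hence ne: "Ts \<noteq> []" by auto
  have "butlast Ts \<in> mlqs n m"
    unfolding mlqs_def
  proof (intro CollectI conjI allI impI)
    show "length (butlast Ts) = length m" using len by simp
    fix i assume i: "i < length m"
    have "butlast Ts ! i = Ts ! i" using i len by (simp add: nth_butlast)
    moreover have "take (Suc i) (m @ [a]) = take (Suc i) m" using i by simp
    ultimately show "butlast Ts ! i \<subseteq> {..<n}" "card (butlast Ts ! i) = sum_list (take (Suc i) m)"
      using assms i by (auto simp: mlqs_def)
  qed
  moreover have "last Ts \<in> TS n (sum_list m + a)"
  proof -
    have "last Ts = Ts ! length m" using len ne by (simp add: last_conv_nth)
    thus ?thesis using assms len by (auto simp: mlqs_def TS_def)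
  qed
  ultimately show ?thesis using ne by simp
qed

lemma mlqs_snoc_I:
  assumes "Ts \<in> mlqs n m" "T \<in> TS n (sum_list m + a)"
  shows "Ts @ [T] \<in> mlqs n (m @ [a])"
  unfolding mlqs_def
proof (rule CollectI, rule conjI)
  have len: "length Ts = length m" using assms by (simp add: mlqs_def)
  show "length (Ts @ [T]) = length (m @ [a])" using len by simp
  show "\<forall>i<length (m @ [a]). (Ts @ [T]) ! i \<subseteq> {..<n} \<and> card ((Ts @ [T]) ! i) = sum_list (take (Suc i) (m @ [a]))"
  proof (intro allI impI)
    fix i assume i: "i < length (m @ [a])"
    show "(Ts @ [T]) ! i \<subseteq> {..<n} \<and> card ((Ts @ [T]) ! i) = sum_list (take (Suc i) (m @ [a]))"
    proof (cases "i < length m")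
      case True
      thus ?thesis using assms len by (auto simp: mlqs_def nth_append)
    next
      case False
      hence "i = length m" using i by simp
      thus ?thesis using assms len by (auto simp: TS_def nth_append)
    qed
  qed
qed

lemma sum_mlqs_snoc:
  "(\<Sum>Ts\<in>mlqs n (m @ [a]). f Ts) = (\<Sum>Ts'\<in>mlqs n m. \<Sum>T\<in>TS n (sum_list m + a). f (Ts' @ [T]))"
proof -
  have "(\<Sum>Ts\<in>mlqs n (m @ [a]). f Ts) = (\<Sum>p\<in>mlqs n m \<times> TS n (sum_list m + a). f (fst p @ [snd p]))"
  proof (rule sum.reindex_bij_witness[where i="\<lambda>p. fst p @ [snd p]" and j="\<lambda>Ts. (butlast Ts, last Ts)"])
    fix Ts assume "Ts \<in> mlqs n (m @ [a])"
    note D = mlqs_snoc_D[OF this]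
    show "fst (butlast Ts, last Ts) @ [snd (butlast Ts, last Ts)] = Ts" using D by simp
    show "(butlast Ts, last Ts) \<in> mlqs n m \<times> TS n (sum_list m + a)" using D by simp
    show "f (fst (butlast Ts, last Ts) @ [snd (butlast Ts, last Ts)]) = f Ts" using D by simp
  next
    fix p assume p: "p \<in> mlqs n m \<times> TS n (sum_list m + a)"
    show "(butlast (fst p @ [snd p]), last (fst p @ [snd p])) = p" by simp
    show "fst p @ [snd p] \<in> mlqs n (m @ [a])" using p by (auto intro: mlqs_snoc_I)
  qed
  also have "\<dots> = (\<Sum>Ts'\<in>mlqs n m. \<Sum>T\<in>TS n (sum_list m + a). f (Ts' @ [T]))"
    using sum.cartesian_product[of "\<lambda>Ts' T. f (Ts' @ [T])" "TS n (sum_list m + a)" "mlqs n m"]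
    by (simp add: split_def)
  finally show ?thesis .
qed

lemma mlqs_Nil: "mlqs n [] = {[]}"
  by (auto simp: mlqs_def)

lemma typw_init: "typw n [] (\<lambda>_. None)"
proof -
  have "pres (\<lambda>_. None) n = []" by (simp add: pres_def)
  thus ?thesis by (simp add: typw_def blocks_Nil)
qed

lemma mlqs_typw:
  "Ts \<in> mlqs n m \<Longrightarrow> sum_list m \<le> n \<Longrightarrow> 0 < n \<Longrightarrow> typw n m (outs n 1 (\<lambda>_. None) Ts)"
proof (induction m arbitrary: Ts rule: rev_induct)
  case Nil
  hence "Ts = []" by (simp add: mlqs_Nil)
  thus ?case by (simp add: typw_init)
next
  case (snoc a m)
  note D = mlqs_snoc_D[OF snoc.prems(1)]
  have IH: "typw n m (outs n 1 (\<lambda>_. None) (butlast Ts))"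
    using snoc.IH[of "butlast Ts"] D snoc.prems(2,3) by simp
  have lenb: "length (butlast Ts) = length m" using D by (simp add: mlqs_def)
  have "outs n 1 (\<lambda>_. None) Ts = queue_out n (last Ts) (Suc (length m)) (outs n 1 (\<lambda>_. None) (butlast Ts))"
    using outs_snoc[of n 1 "\<lambda>_. None" "butlast Ts" "last Ts"] D lenb by simp
  moreover have "typw n (m @ [a]) (queue_out n (last Ts) (Suc (length m)) (outs n 1 (\<lambda>_. None) (butlast Ts)))"
    by (rule queue_out_typw[OF IH]) (use D snoc.prems(2,3) in simp_all)
  ultimately show ?case by simp
qed

theorem corollary7p3:
  fixes n :: nat and m :: "nat list" and t :: "nat \<Rightarrow> 'a::comm_ring_1"
  assumes "0 < n" and "is_type n m" and "m \<noteq> []"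
  shows "Z n m t = Z n (butlast m) t * complete_hom (n - sum_list m) (hvars m t)"
proof -
  define m' where "m' = butlast m"
  define a where "a = last m"
  have m: "m = m' @ [a]" using assms(3) by (simp add: m'_def a_def)
  have cn: "sum_list m' + a \<le> n" using assms(2) m by (simp add: is_type_def)
  let ?x0 = "\<lambda>_::nat. None :: nat option"
  let ?h = "hc (n - (sum_list m' + a)) (hvars (m' @ [a]) t)"
  have "Z n m t = (\<Sum>Ts'\<in>mlqs n m'. \<Sum>T\<in>TS n (sum_list m' + a). mlq_weight n 1 ?x0 (Ts' @ [T]) t)"
    unfolding Z_def m by (rule sum_mlqs_snoc)
  also have "\<dots> = (\<Sum>Ts'\<in>mlqs n m'. mlq_weight n 1 ?x0 Ts' t * ?h)"
  proof (rule sum.cong[OF refl])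
    fix Ts' assume Ts': "Ts' \<in> mlqs n m'"
    have len: "length Ts' = length m'" using Ts' by (simp add: mlqs_def)
    have ty: "typw n m' (outs n 1 ?x0 Ts')" using mlqs_typw[OF Ts'] cn assms(1) by simp
    have "(\<Sum>T\<in>TS n (sum_list m' + a). mlq_weight n 1 ?x0 (Ts' @ [T]) t)
        = (\<Sum>T\<in>TS n (sum_list m' + a). mlq_weight n 1 ?x0 Ts' t * queue_weight n T (Suc (length m')) (outs n 1 ?x0 Ts') t)"
      by (rule sum.cong[OF refl]) (simp add: mlq_snoc len)
    also have "\<dots> = mlq_weight n 1 ?x0 Ts' t * (\<Sum>T\<in>TS n (sum_list m' + a). queue_weight n T (Suc (length m')) (outs n 1 ?x0 Ts') t)"
      by (simp add: sum_distrib_left)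
    also have "\<dots> = mlq_weight n 1 ?x0 Ts' t * ?h"
      by (simp only: last_queue[OF ty cn assms(1)])
    finally show "(\<Sum>T\<in>TS n (sum_list m' + a). mlq_weight n 1 ?x0 (Ts' @ [T]) t) = mlq_weight n 1 ?x0 Ts' t * ?h" .
  qed
  also have "\<dots> = Z n m' t * ?h" by (simp add: Z_def sum_distrib_right)
  finally show ?thesis by (simp add: m m'_def[symmetric] complete_hom_hc)
qed


end
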